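(* Let $J,J^r:\mathbb{R}^n\to\mathbb{R}^k$ be continuously differentiable and let $\epsilon\in[0,\infty)^k$ satisfy $\sup_{u\in\mathbb{R}^n}\|\nabla J_i(u)-\nabla J_i^r(u)\|_2\le\epsilon_i$ for all $i\in\{1,\dots,k\}$. Let $P_c$ and $P_c^r$ denote the Pareto critical sets of $J$ and $J^r$, respectively, and define $$P_1^r:=\Big\{u\in\mathbb{R}^n:\min_{\alpha\in\Delta_k}\|DJ^r(u)^\top\alpha\|_2^2\le\|\epsilon\|_\infty^2\Big\},\qquad P_2^r:=\Big\{u\in\mathbb{R}^n:\min_{\alpha\in\Delta_k}\big(\|DJ^r(u)^\top\alpha\|_2^2-(\alpha^\top\epsilon)^2\big)\le 0\Big\}.$$ Then $P_c\subseteq P_2^r\subseteq P_1^r$ and $P_c^r\subseteq P_2^r\subseteq P_1^r$.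
   Context: $\Delta_k:=\{\alpha\in[0,\infty)^k:\sum_{i=1}^k\alpha_i=1\}$. For differentiable $J:\mathbb{R}^n\to\mathbb{R}^k$, $DJ(u)\in\mathbb{R}^{k\times n}$ is the Jacobian, so $DJ(u)^\top\alpha=\sum_i\alpha_i\nabla J_i(u)$. The Pareto critical set of $J$ is the set of all $u\in\mathbb{R}^n$ for which there exists $\alpha\in\Delta_k$ with $DJ(u)^\top\alpha=0$. *)

theory Defs
  imports "HOL-Analysis.Analysis"
begin

definition grad :: "(real^'n \<Rightarrow> real^'k) \<Rightarrow> 'k \<Rightarrow> real^'n \<Rightarrow> real^'n" where
  "grad J i u = (THE g. GDERIV (\<lambda>v. J v $ i) u :> g)"

definition jac :: "(real^'n \<Rightarrow> real^'k) \<Rightarrow> real^'n \<Rightarrow> real^'n^'k" where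
  "jac J u = (\<chi> i. grad J i u)"

definition C1_map :: "(real^'n \<Rightarrow> real^'k) \<Rightarrow> bool" where
  "C1_map J \<longleftrightarrow> (\<forall>u. J differentiable (at u)) \<and> (\<forall>i. continuous_on UNIV (grad J i))"

definition std_simplex :: "(real^'k) set" where
  "std_simplex = {\<alpha>. (\<forall>i. 0 \<le> \<alpha> $ i) \<and> (\<Sum>i\<in>UNIV. \<alpha> $ i) = 1}"

definition pareto_critical :: "(real^'n \<Rightarrow> real^'k) \<Rightarrow> (real^'n) set" where
  "pareto_critical J = {u. \<exists>\<alpha>\<in>std_simplex. transpose (jac J u) *v \<alpha> = 0}"

definition P1 :: "(real^'n \<Rightarrow> real^'k) \<Rightarrow> real^'k \<Rightarrow> (real^'n) set" where
  "P1 Jr \<epsilon> = {u. (INF \<alpha>\<in>std_simplex. (norm (transpose (jac Jr u) *v \<alpha>))^2) \<le> (infnorm \<epsilon>)^2}"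

definition P2 :: "(real^'n \<Rightarrow> real^'k) \<Rightarrow> real^'k \<Rightarrow> (real^'n) set" where
  "P2 Jr \<epsilon> = {u. (INF \<alpha>\<in>std_simplex. (norm (transpose (jac Jr u) *v \<alpha>))^2 - (\<alpha> \<bullet> \<epsilon>)^2) \<le> 0}"

end

theory Submission
  imports Defs
begin

lemma tr_jac: "transpose (jac J u) *v \<alpha> = (\<Sum>i\<in>UNIV. (\<alpha> $ i) *\<^sub>R grad J i u)"
  by (simp add: vec_eq_iff matrix_vector_mult_def transpose_def jac_def sum_component mult.commute)

lemma comp_le_infnorm: "\<bar>x $ i\<bar> \<le> infnorm (x::real^'k)"
  by (rule component_le_infnorm_cart)

lemma dot_bounds:
  assumes "\<alpha> \<in> std_simplex" "\<forall>i. 0 \<le> (\<epsilon>::real^'k) $ i"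
  shows "0 \<le> \<alpha> \<bullet> \<epsilon> \<and> \<alpha> \<bullet> \<epsilon> \<le> infnorm \<epsilon>"
proof
  have a: "\<forall>i. 0 \<le> \<alpha> $ i" "(\<Sum>i\<in>UNIV. \<alpha> $ i) = 1" using assms(1) by (auto simp: std_simplex_def)
  show "0 \<le> \<alpha> \<bullet> \<epsilon>" unfolding inner_vec_def using a assms(2) by (auto intro!: sum_nonneg)
  have "\<alpha> \<bullet> \<epsilon> = (\<Sum>i\<in>UNIV. \<alpha> $ i * \<epsilon> $ i)" by (simp add: inner_vec_def)
  also have "\<dots> \<le> (\<Sum>i\<in>UNIV. \<alpha> $ i * infnorm \<epsilon>)"
    apply (rule sum_mono) using a comp_le_infnorm[of \<epsilon>]
    by (meson abs_ge_self mult_left_mono order_trans)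
  also have "\<dots> = infnorm \<epsilon>" using a by (simp add: sum_distrib_right[symmetric])
  finally show "\<alpha> \<bullet> \<epsilon> \<le> infnorm \<epsilon>" .
qed

lemma simplex_ne: "std_simplex \<noteq> ({}::(real^'k) set)"
proof -
  have "(\<chi> i. 1 / real CARD('k)) \<in> (std_simplex :: (real^'k) set)"
    by (simp add: std_simplex_def)
  then show ?thesis by auto
qed

lemma bdd_h:
  assumes "\<forall>i. 0 \<le> (\<epsilon>::real^'k) $ i"
  shows "bdd_below ((\<lambda>\<alpha>. (norm (transpose (jac Jr u) *v \<alpha>))^2 - (\<alpha> \<bullet> \<epsilon>)^2) ` std_simplex)"
proof -
  have "- ((infnorm \<epsilon>)^2) \<le> (norm (transpose (jac Jr u) *v \<alpha>))^2 - (\<alpha> \<bullet> \<epsilon>)^2"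
    if "\<alpha> \<in> std_simplex" for \<alpha> :: "real^'k"
  proof -
    from dot_bounds[OF that assms] have "(\<alpha> \<bullet> \<epsilon>)^2 \<le> (infnorm \<epsilon>)^2"
      by (simp add: power_mono)
    then show ?thesis by (smt (verit) zero_le_power2)
  qed
  then show ?thesis by (rule bdd_belowI2)
qed

lemma P2_P1:
  assumes "\<forall>i. 0 \<le> (\<epsilon>::real^'k) $ i"
  shows "P2 Jr \<epsilon> \<subseteq> P1 Jr \<epsilon>"
proof
  fix u assume "u \<in> P2 Jr \<epsilon>"
  then have H: "(INF \<alpha>\<in>std_simplex. (norm (transpose (jac Jr u) *v \<alpha>))^2 - (\<alpha> \<bullet> \<epsilon>)^2) \<le> 0"
    by (simp add: P2_def)
  define f where "f = (\<lambda>\<alpha>::real^'k. (norm (transpose (jac Jr u) *v \<alpha>))^2)"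
  define c where "c = (infnorm \<epsilon>)^2"
  have bf: "bdd_below (f ` std_simplex)" unfolding f_def by (rule bdd_belowI2[where m=0]) simp
  have "Inf (f ` std_simplex) \<le> c"
  proof (rule ccontr)
    assume "\<not> ?thesis"
    then have d: "0 < Inf (f ` std_simplex) - c" by simp
    have "(INF \<alpha>\<in>std_simplex. (norm (transpose (jac Jr u) *v \<alpha>))^2 - (\<alpha> \<bullet> \<epsilon>)^2) < Inf (f ` std_simplex) - c"
      using H d by linarith
    then obtain \<alpha> where a: "\<alpha> \<in> std_simplex" and
      lt: "(norm (transpose (jac Jr u) *v \<alpha>))^2 - (\<alpha> \<bullet> \<epsilon>)^2 < Inf (f ` std_simplex) - c"
      using cINF_less_iff[OF simplex_ne bdd_h[OF assms, where Jr=Jr and u=u]] by blast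
    from dot_bounds[OF a assms] have "(\<alpha> \<bullet> \<epsilon>)^2 \<le> c" unfolding c_def by (simp add: power_mono)
    moreover have "Inf (f ` std_simplex) \<le> f \<alpha>" using bf a by (simp add: cINF_lower)
    ultimately show False using lt unfolding f_def by linarith
  qed
  then show "u \<in> P1 Jr \<epsilon>" by (simp add: P1_def f_def c_def)
qed

lemma in_P2:
  assumes "\<forall>i. 0 \<le> (\<epsilon>::real^'k) $ i" "\<alpha> \<in> std_simplex"
    and "norm (transpose (jac Jr u) *v \<alpha>) \<le> \<alpha> \<bullet> \<epsilon>"
  shows "u \<in> P2 Jr \<epsilon>"
proof -
  have "(norm (transpose (jac Jr u) *v \<alpha>))^2 \<le> (\<alpha> \<bullet> \<epsilon>)^2"
    using assms(3) by (simp add: power_mono)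
  then have "(INF \<alpha>\<in>std_simplex. (norm (transpose (jac Jr u) *v \<alpha>))^2 - (\<alpha> \<bullet> \<epsilon>)^2) \<le> 0"
    using cINF_lower[OF bdd_h[OF assms(1), where Jr=Jr and u=u] assms(2)] by linarith
  then show ?thesis by (simp add: P2_def)
qed

theorem mainTheorem2:
  fixes J Jr :: "real^'n \<Rightarrow> real^'k" and \<epsilon> :: "real^'k"
  assumes "C1_map J" and "C1_map Jr"
    and "\<forall>i. 0 \<le> \<epsilon> $ i"
    and "\<forall>i u. norm (grad J i u - grad Jr i u) \<le> \<epsilon> $ i"
  shows "pareto_critical J \<subseteq> P2 Jr \<epsilon> \<and> P2 Jr \<epsilon> \<subseteq> P1 Jr \<epsilon> \<and>
         pareto_critical Jr \<subseteq> P2 Jr \<epsilon> \<and> P2 Jr \<epsilon> \<subseteq> P1 Jr \<epsilon>"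
proof -
  have A: "pareto_critical J \<subseteq> P2 Jr \<epsilon>"
  proof
    fix u assume "u \<in> pareto_critical J"
    then obtain \<alpha> where a: "\<alpha> \<in> std_simplex" and z: "transpose (jac J u) *v \<alpha> = 0"
      by (auto simp: pareto_critical_def)
    have nn: "\<forall>i. 0 \<le> \<alpha> $ i" using a by (simp add: std_simplex_def)
    have "transpose (jac Jr u) *v \<alpha> = transpose (jac Jr u) *v \<alpha> - transpose (jac J u) *v \<alpha>"
      using z by simp
    also have "\<dots> = (\<Sum>i\<in>UNIV. (\<alpha> $ i) *\<^sub>R (grad Jr i u - grad J i u))"
      unfolding tr_jac by (simp add: sum_subtractf scaleR_diff_right)
    finally have e: "transpose (jac Jr u) *v \<alpha> = \<dots>" .
    have "norm (\<Sum>i\<in>UNIV. (\<alpha> $ i) *\<^sub>R (grad Jr i u - grad J i u))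
        \<le> (\<Sum>i\<in>UNIV. norm ((\<alpha> $ i) *\<^sub>R (grad Jr i u - grad J i u)))"
      by (rule norm_sum)
    also have "\<dots> \<le> (\<Sum>i\<in>UNIV. \<alpha> $ i * \<epsilon> $ i)"
    proof (rule sum_mono)
      fix i
      have "norm (grad Jr i u - grad J i u) \<le> \<epsilon> $ i"
        using assms(4) by (metis norm_minus_commute)
      then show "norm ((\<alpha> $ i) *\<^sub>R (grad Jr i u - grad J i u)) \<le> \<alpha> $ i * \<epsilon> $ i"
        using nn by (simp add: mult_left_mono)
    qed
    also have "\<dots> = \<alpha> \<bullet> \<epsilon>" by (simp add: inner_vec_def)
    finally show "u \<in> P2 Jr \<epsilon>" using in_P2[OF assms(3) a, of Jr u] e by metis
  qed
  have B: "pareto_critical Jr \<subseteq> P2 Jr \<epsilon>"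
  proof
    fix u assume "u \<in> pareto_critical Jr"
    then obtain \<alpha> where a: "\<alpha> \<in> std_simplex" and z: "transpose (jac Jr u) *v \<alpha> = 0"
      by (auto simp: pareto_critical_def)
    show "u \<in> P2 Jr \<epsilon>" using in_P2[OF assms(3) a, of Jr u] z dot_bounds[OF a assms(3)] by simp
  qed
  show ?thesis using A B P2_P1[OF assms(3)] by blast
qed

end
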